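(* Let $d\ge 1$, $\delta>0$, $N\ge1$. Let $\varphi_1,\dots,\varphi_N$ be i.i.d. random vectors uniformly distributed on $\mathbb{S}^{d-1}$, and let $\epsilon_1,\dots,\epsilon_N$ be i.i.d. uniform on $[-\delta,\delta]$, independent of the $\varphi_n$. Let $\psi\in\mathbb{S}^{d-1}$, $P_N=\bigcap_{n=1}^N\{u\in\mathbb{R}^d: |\langle u,\varphi_n\rangle-\epsilon_n|\le\delta\}$ and $R_N(\psi)=\sup\{r\ge0: r\psi\in P_N\}$. Let $\xi$ be uniform on $[0,2\delta]$ and $Z=|\langle e_0,\varphi\rangle|$, where $e_0=(1,0,\dots,0)\in\mathbb{R}^d$ and $\varphi$ is uniformly distributed on $\mathbb{S}^{d-1}$, with $\xi$ and $Z$ independent, and set $X=\xi/Z$. Let $X_1,\dots,X_N$ be independent copies of $X$ and $Y_N=\min\{X_n:1\le n\le N\}$. Then $R_N(\psi)$ has the same distribution as $Y_N$.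
   Context: Here $\mathbb{S}^{d-1}$ is the unit sphere in $\mathbb{R}^d$; "uniformly distributed" refers to normalized surface measure. *)

theory Defs
  imports "HOL-Probability.Probability"
begin

text \<open>Normalized surface measure on the unit sphere (uniform distribution on S^{d-1}),
  defined as the cone measure: sigma(A) = lambda({x in B : x/|x| in A}) / lambda(B),
  i.e. the push-forward of the uniform distribution on the open unit ball under radial projection.\<close>
definition uniform_sphere :: "'a::euclidean_space measure" where
  "uniform_sphere = distr (uniform_measure lborel (ball 0 1)) borel (\<lambda>x. x /\<^sub>R norm x)"

definition polytope_P :: "nat \<Rightarrow> real \<Rightarrow> (nat \<Rightarrow> 'a::euclidean_space) \<Rightarrow> (nat \<Rightarrow> real) \<Rightarrow> 'a set" where
  "polytope_P N \<delta> phi eps = (\<Inter>n\<in>{1..N}. {u. \<bar>inner u (phi n) - eps n\<bar> \<le> \<delta>})"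

definition radial_R :: "nat \<Rightarrow> real \<Rightarrow> (nat \<Rightarrow> 'a::euclidean_space) \<Rightarrow> (nat \<Rightarrow> real) \<Rightarrow> 'a \<Rightarrow> ereal" where
  "radial_R N \<delta> phi eps psi = Sup {ereal r | r. r \<ge> 0 \<and> r *\<^sub>R psi \<in> polytope_P N \<delta> phi eps}"

definition law_X :: "real \<Rightarrow> 'a::euclidean_space \<Rightarrow> real measure" where
  "law_X \<delta> e0 = distr (uniform_measure lborel {0..2*\<delta>} \<Otimes>\<^sub>M (uniform_sphere :: 'a measure)) borel
     (\<lambda>(s, v). s / \<bar>inner e0 v\<bar>)"

definition law_Y :: "nat \<Rightarrow> real \<Rightarrow> 'a::euclidean_space \<Rightarrow> real measure" where
  "law_Y N \<delta> e0 = distr (\<Pi>\<^sub>M i\<in>{1..N}. law_X \<delta> e0) borel (\<lambda>x. Min (x ` {1..N}))"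

end

theory Submission
  imports Defs
begin

lemma PiM_shear_nn:
  fixes I :: "'i set" and a :: real
  assumes fin: "finite I" and iI: "i \<notin> I" and jI: "j \<in> I"
    and f[measurable]: "f \<in> borel_measurable (PiM (insert i I) (\<lambda>_. lborel :: real measure))"
  shows "(\<integral>\<^sup>+x. f (x(i := x i + a * x j)) \<partial>PiM (insert i I) (\<lambda>_. lborel)) =
         (\<integral>\<^sup>+x. f x \<partial>PiM (insert i I) (\<lambda>_. lborel))"
proof -
  interpret product_sigma_finite "\<lambda>_. lborel :: real measure"
    by (simp add: product_sigma_finite_def lborel.sigma_finite_measure_axioms)
  have ij: "i \<noteq> j" using iI jI by auto
  have sm: "(\<lambda>x. x(i := x i + a * x j)) \<in> measurable (PiM (insert i I) (\<lambda>_. lborel)) (PiM (insert i I) (\<lambda>_. lborel :: real measure))"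
  proof (rule measurable_PiM_single')
    fix k assume "k \<in> insert i I"
    then show "(\<lambda>x. (x(i := x i + a * x j)) k) \<in> measurable (PiM (insert i I) (\<lambda>_. lborel)) lborel"
      using jI by (cases "k = i") auto
  qed (auto simp: space_PiM)
  have g: "(\<lambda>x. f (x(i := x i + a * x j))) \<in> borel_measurable (PiM (insert i I) (\<lambda>_. lborel))"
    using measurable_comp[OF sm f] by (simp add: comp_def)
  have "(\<integral>\<^sup>+x. f (x(i := x i + a * x j)) \<partial>PiM (insert i I) (\<lambda>_. lborel))
      = (\<integral>\<^sup>+ x. (\<integral>\<^sup>+ y. f (x(i := a * x j + 1 * y)) \<partial>lborel) \<partial>(PiM I (\<lambda>_. lborel)))"
    using ij by (subst product_nn_integral_insert[OF fin iI g]) (simp add: add.commute)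
  also have "\<dots> = (\<integral>\<^sup>+ x. (\<integral>\<^sup>+ y. f (x(i := y)) \<partial>lborel) \<partial>(PiM I (\<lambda>_. lborel)))"
  proof (rule nn_integral_cong)
    fix x assume x: "x \<in> space (PiM I (\<lambda>_. lborel :: real measure))"
    have m: "(\<lambda>y. f (x(i := y))) \<in> borel_measurable borel"
      using measurable_comp[OF measurable_component_update[OF x iI] f] by (simp add: comp_def)
    show "(\<integral>\<^sup>+ y. f (x(i := a * x j + 1 * y)) \<partial>lborel) = (\<integral>\<^sup>+ y. f (x(i := y)) \<partial>lborel)"
      using nn_integral_real_affine[OF m, of 1 "a * x j"] by simp
  qed
  also have "\<dots> = (\<integral>\<^sup>+x. f x \<partial>PiM (insert i I) (\<lambda>_. lborel))"
    by (rule product_nn_integral_insert[OF fin iI f, symmetric])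
  finally show ?thesis .
qed

definition mp :: "('a::euclidean_space \<Rightarrow> 'a) \<Rightarrow> bool" where
  "mp T \<longleftrightarrow> T \<in> borel_measurable borel \<and>
     (\<forall>f::'a \<Rightarrow> ennreal. f \<in> borel_measurable borel \<longrightarrow> (\<integral>\<^sup>+x. f (T x) \<partial>lborel) = (\<integral>\<^sup>+x. f x \<partial>lborel))"

lemma sum_Basis_upd:
  fixes x :: "'a::euclidean_space \<Rightarrow> real"
  assumes "e \<in> Basis"
  shows "(\<Sum>k\<in>Basis. (x(e := y)) k *\<^sub>R k) = (\<Sum>k\<in>Basis. x k *\<^sub>R k) + (y - x e) *\<^sub>R e"
proof -
  have "(\<Sum>k\<in>Basis. (x(e := y)) k *\<^sub>R k) = y *\<^sub>R e + (\<Sum>k\<in>Basis - {e}. x k *\<^sub>R k)"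
    using assms by (subst sum.remove[of _ e]) (auto intro!: sum.cong)
  moreover have "(\<Sum>k\<in>Basis. x k *\<^sub>R k) = x e *\<^sub>R e + (\<Sum>k\<in>Basis - {e}. x k *\<^sub>R k)"
    using assms by (subst sum.remove[of _ e]) auto
  ultimately show ?thesis by (simp add: algebra_simps)
qed

lemma inner_sum_Basis:
  fixes x :: "'a::euclidean_space \<Rightarrow> real"
  assumes "b \<in> Basis"
  shows "(\<Sum>k\<in>Basis. x k *\<^sub>R k) \<bullet> b = x b"
  using assms by (simp add: inner_sum_left inner_Basis if_distrib cong: if_cong)

lemma mp_shear:
  fixes e b :: "'a::euclidean_space"
  assumes e: "e \<in> Basis" and b: "b \<in> Basis" and eb: "e \<noteq> b"
  shows "mp (\<lambda>v. v + (a * (v \<bullet> b)) *\<^sub>R e)"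
  unfolding mp_def
proof (intro conjI allI impI)
  show "(\<lambda>v. v + (a * (v \<bullet> b)) *\<^sub>R e) \<in> borel_measurable borel" by measurable
  fix f :: "'a \<Rightarrow> ennreal" assume f[measurable]: "f \<in> borel_measurable borel"
  let ?S = "\<lambda>x::'a \<Rightarrow> real. \<Sum>k\<in>Basis. x k *\<^sub>R k"
  have Sm[measurable]: "?S \<in> borel_measurable (PiM Basis (\<lambda>_. lborel))" by measurable
  have B: "Basis = insert e (Basis - {e})" using e by auto
  have "(\<integral>\<^sup>+x. f (x + (a * (x \<bullet> b)) *\<^sub>R e) \<partial>lborel) =
        (\<integral>\<^sup>+x. f (?S x + (a * (?S x \<bullet> b)) *\<^sub>R e) \<partial>PiM Basis (\<lambda>_. lborel))"
    by (subst lborel_eq) (simp add: nn_integral_distr)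
  also have "\<dots> = (\<integral>\<^sup>+x. (\<lambda>x. f (?S x)) (x(e := x e + a * x b)) \<partial>PiM Basis (\<lambda>_. lborel))"
    unfolding sum_Basis_upd[OF e] inner_sum_Basis[OF b] fun_upd_same by simp
  also have "\<dots> = (\<integral>\<^sup>+x. f (?S x) \<partial>PiM Basis (\<lambda>_. lborel))"
  proof -
    have m: "(\<lambda>x. f (?S x)) \<in> borel_measurable (PiM (insert e (Basis - {e})) (\<lambda>_. lborel))"
      using B[symmetric] by simp
    have "b \<in> Basis - {e}" using b eb by auto
    from PiM_shear_nn[OF _ _ this m, of a] B[symmetric] show ?thesis by simp
  qed
  also have "\<dots> = (\<integral>\<^sup>+x. f x \<partial>lborel)"
    by (subst (2) lborel_eq) (simp add: nn_integral_distr)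
  finally show "(\<integral>\<^sup>+x. f (x + (a * (x \<bullet> b)) *\<^sub>R e) \<partial>lborel) = (\<integral>\<^sup>+x. f x \<partial>lborel)" .
qed

lemma mp_comp:
  assumes "mp T1" "mp T2" shows "mp (\<lambda>x. T1 (T2 x))"
  unfolding mp_def
proof (intro conjI allI impI)
  have [measurable]: "T1 \<in> borel_measurable borel" "T2 \<in> borel_measurable borel"
    using assms by (auto simp: mp_def)
  show "(\<lambda>x. T1 (T2 x)) \<in> borel_measurable borel" by measurable
  fix f :: "'a \<Rightarrow> ennreal" assume [measurable]: "f \<in> borel_measurable borel"
  have "(\<integral>\<^sup>+x. (\<lambda>y. f (T1 y)) (T2 x) \<partial>lborel) = (\<integral>\<^sup>+x. f (T1 x) \<partial>lborel)"
  proof -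
    have "(\<lambda>y. f (T1 y)) \<in> borel_measurable borel" by measurable
    then show ?thesis using assms(2) unfolding mp_def by blast
  qed
  also have "\<dots> = (\<integral>\<^sup>+x. f x \<partial>lborel)" using assms(1) unfolding mp_def by auto
  finally show "(\<integral>\<^sup>+x. f (T1 (T2 x)) \<partial>lborel) = (\<integral>\<^sup>+x. f x \<partial>lborel)" by simp
qed

definition givens :: "'a::euclidean_space \<Rightarrow> 'a \<Rightarrow> real \<Rightarrow> real \<Rightarrow> 'a \<Rightarrow> 'a" where
  "givens e b c s v = v + ((c - 1) * (v \<bullet> e) - s * (v \<bullet> b)) *\<^sub>R e + (s * (v \<bullet> e) + (c - 1) * (v \<bullet> b)) *\<^sub>R b"

lemma givens_shears:
  fixes e b :: "'a::euclidean_space"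
  assumes e: "e \<in> Basis" and b: "b \<in> Basis" and eb: "e \<noteq> b"
    and cs: "c^2 + s^2 = 1" and c: "c \<noteq> -1"
  defines "t \<equiv> s / (1 + c)"
  shows "givens e b c s v =
    (\<lambda>v. v + (- t * (v \<bullet> b)) *\<^sub>R e) ((\<lambda>v. v + (s * (v \<bullet> e)) *\<^sub>R b) ((\<lambda>v. v + (- t * (v \<bullet> b)) *\<^sub>R e) v))"
proof -
  have c1: "1 + c \<noteq> 0" using c by auto
  have ts: "t * s = 1 - c"
  proof -
    have "t * s = s^2 / (1 + c)" by (simp add: t_def power2_eq_square)
    also have "\<dots> = (1 - c) * (1 + c) / (1 + c)" using cs by (simp add: algebra_simps power2_eq_square)
    finally show ?thesis using c1 by simp
  qed
  have tc: "t * (1 + c) = s" using c1 by (simp add: t_def)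
  have eb0: "e \<bullet> b = 0" "b \<bullet> e = 0" using e b eb by (auto simp: inner_Basis)
  have ee: "e \<bullet> e = 1" "b \<bullet> b = 1" using e b by (auto simp: inner_Basis)
  let ?p = "v \<bullet> e" and ?q = "v \<bullet> b"
  have rhs: "(\<lambda>v. v + (- t * (v \<bullet> b)) *\<^sub>R e) ((\<lambda>v. v + (s * (v \<bullet> e)) *\<^sub>R b) ((\<lambda>v. v + (- t * (v \<bullet> b)) *\<^sub>R e) v))
     = v + (- t * ?q) *\<^sub>R e + (s * (?p - t * ?q)) *\<^sub>R b + (- t * (?q + s * (?p - t * ?q))) *\<^sub>R e"
    by (simp add: inner_add_left inner_diff_left eb0 ee)
  have A: "- t * ?q + (- t * (?q + s * (?p - t * ?q))) = (c - 1) * ?p - s * ?q"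
  proof -
    have "- t * ?q + (- t * (?q + s * (?p - t * ?q))) = - (t * s) * ?p - t * (2 - t * s) * ?q"
      by (simp add: algebra_simps)
    also have "\<dots> = (c - 1) * ?p - (t * (1 + c)) * ?q" unfolding ts by (simp add: algebra_simps)
    finally show ?thesis by (simp add: tc)
  qed
  have B: "s * (?p - t * ?q) = s * ?p + (c - 1) * ?q"
  proof -
    have "s * (?p - t * ?q) = s * ?p - (t * s) * ?q" by (simp add: algebra_simps)
    also have "\<dots> = s * ?p + (c - 1) * ?q" unfolding ts by (simp add: algebra_simps)
    finally show ?thesis .
  qed
  have "v + (- t * ?q) *\<^sub>R e + (s * (?p - t * ?q)) *\<^sub>R b + (- t * (?q + s * (?p - t * ?q))) *\<^sub>R e
     = v + (- t * ?q + (- t * (?q + s * (?p - t * ?q)))) *\<^sub>R e + (s * (?p - t * ?q)) *\<^sub>R b"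
    by (simp only: scaleR_add_left add_ac)
  also have "\<dots> = v + ((c - 1) * ?p - s * ?q) *\<^sub>R e + (s * (?p - t * ?q)) *\<^sub>R b"
    unfolding A ..
  also have "\<dots> = givens e b c s v" unfolding B givens_def ..
  finally show ?thesis unfolding rhs ..
qed

lemma givens_inner:
  fixes e b :: "'a::euclidean_space"
  assumes e: "e \<in> Basis" and b: "b \<in> Basis" and eb: "e \<noteq> b" and cs: "c^2 + s^2 = 1"
  shows "givens e b c s v \<bullet> givens e b c s w = v \<bullet> w"
proof -
  have eb0: "e \<bullet> b = 0" "b \<bullet> e = 0" using e b eb by (auto simp: inner_Basis)
  have ee: "e \<bullet> e = 1" "b \<bullet> b = 1" using e b by (auto simp: inner_Basis)
  define p where "p = v \<bullet> e" define q where "q = v \<bullet> b"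
  define p' where "p' = w \<bullet> e" define q' where "q' = w \<bullet> b"
  have "givens e b c s v \<bullet> givens e b c s w = v \<bullet> w + (c^2 + s^2 - 1) * (p * p' + q * q')"
  proof -
    have i: "e \<bullet> w = p'" "b \<bullet> w = q'" "w \<bullet> e = p'" "w \<bullet> b = q'"
      "v \<bullet> e = p" "v \<bullet> b = q" "e \<bullet> v = p" "b \<bullet> v = q"
      by (simp_all add: p_def q_def p'_def q'_def inner_commute)
    show ?thesis unfolding givens_def
      by (simp add: inner_add_left inner_add_right eb0 ee i algebra_simps power2_eq_square)
  qed
  then show ?thesis using cs by simp
qed

lemma givens_comp:
  fixes e b :: "'a::euclidean_space"
  assumes e: "e \<in> Basis" and b: "b \<in> Basis" and eb: "e \<noteq> b"
  shows "givens e b c s v \<bullet> e = c * (v \<bullet> e) - s * (v \<bullet> b)"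
    "givens e b c s v \<bullet> b = s * (v \<bullet> e) + c * (v \<bullet> b)"
    "k \<in> Basis \<Longrightarrow> k \<noteq> e \<Longrightarrow> k \<noteq> b \<Longrightarrow> givens e b c s v \<bullet> k = v \<bullet> k"
proof -
  have eb0: "e \<bullet> b = 0" "b \<bullet> e = 0" using e b eb by (auto simp: inner_Basis)
  have ee: "e \<bullet> e = 1" "b \<bullet> b = 1" using e b by (auto simp: inner_Basis)
  show "givens e b c s v \<bullet> e = c * (v \<bullet> e) - s * (v \<bullet> b)"
    by (simp add: givens_def inner_add_left eb0 ee algebra_simps)
  show "givens e b c s v \<bullet> b = s * (v \<bullet> e) + c * (v \<bullet> b)"
    by (simp add: givens_def inner_add_left eb0 ee algebra_simps)
  assume k: "k \<in> Basis" "k \<noteq> e" "k \<noteq> b"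
  then have "e \<bullet> k = 0" "b \<bullet> k = 0" using e b by (auto simp: inner_Basis)
  then show "givens e b c s v \<bullet> k = v \<bullet> k"
    by (simp add: givens_def inner_add_left)
qed

lemma mp_givens:
  fixes e b :: "'a::euclidean_space"
  assumes e: "e \<in> Basis" and b: "b \<in> Basis" and eb: "e \<noteq> b"
    and cs: "c^2 + s^2 = 1" and c: "c \<noteq> -1"
  shows "mp (givens e b c s)"
proof -
  define t where "t = s / (1 + c)"
  have m1: "mp (\<lambda>v. v + (- t * (v \<bullet> b)) *\<^sub>R e)" by (rule mp_shear[OF e b eb])
  have m2: "mp (\<lambda>v. v + (s * (v \<bullet> e)) *\<^sub>R b)" using eb by (intro mp_shear[OF b e]) auto
  have m3: "mp (\<lambda>x. (\<lambda>v. v + (- t * (v \<bullet> b)) *\<^sub>R e) ((\<lambda>v. v + (s * (v \<bullet> e)) *\<^sub>R b) ((\<lambda>v. v + (- t * (v \<bullet> b)) *\<^sub>R e) x)))"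
    using mp_comp[OF m1 mp_comp[OF m2 m1]] by simp
  have "givens e b c s = (\<lambda>x. (\<lambda>v. v + (- t * (v \<bullet> b)) *\<^sub>R e) ((\<lambda>v. v + (s * (v \<bullet> e)) *\<^sub>R b) ((\<lambda>v. v + (- t * (v \<bullet> b)) *\<^sub>R e) x)))"
    using givens_shears[OF e b eb cs c] unfolding t_def by (intro ext) simp
  with m3 show ?thesis by simp
qed

definition rot :: "('a::euclidean_space \<Rightarrow> 'a) \<Rightarrow> bool" where
  "rot T \<longleftrightarrow> mp T \<and> (\<forall>x y. T x \<bullet> T y = x \<bullet> y)"

lemma mp_id: "mp (\<lambda>x. x)" by (simp add: mp_def)

lemma rot_exists_aux:
  fixes e :: "'a::euclidean_space"
  assumes e: "e \<in> Basis" and S: "finite S" "S \<subseteq> Basis - {e}"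
  shows "\<forall>u. (\<forall>k\<in>Basis - insert e S. u \<bullet> k = 0) \<longrightarrow> (\<exists>T. rot T \<and> (\<forall>k\<in>Basis - {e}. T u \<bullet> k = 0))"
  using S
proof (induction S rule: finite_subset_induct)
  case empty
  then show ?case by (auto simp: rot_def mp_id intro!: exI[of _ "\<lambda>x. x"])
next
  case (insert b S)
  show ?case
  proof (intro allI impI)
    fix u :: 'a assume hu: "\<forall>k\<in>Basis - insert e (insert b S). u \<bullet> k = 0"
    have b: "b \<in> Basis" "b \<noteq> e" using insert by auto
    define p where "p = u \<bullet> e"
    define q where "q = u \<bullet> b"
    show "\<exists>T. rot T \<and> (\<forall>k\<in>Basis - {e}. T u \<bullet> k = 0)"
    proof (cases "q = 0")
      case True
      then have "\<forall>k\<in>Basis - insert e S. u \<bullet> k = 0" using hu q_def by auto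
      then show ?thesis using insert.IH by blast
    next
      case False
      define r where "r = sqrt (p^2 + q^2)"
      have r: "r > 0" using False by (simp add: r_def add_nonneg_pos)
      have r2: "r^2 = p^2 + q^2" by (simp add: r_def)
      define c where "c = p / r"
      define s where "s = - q / r"
      have cs: "c^2 + s^2 = 1" using r r2 False by (simp add: c_def s_def power_divide add_divide_distrib[symmetric])
      have c1: "c \<noteq> -1"
      proof
        assume "c = -1"
        with cs have "s^2 = 0" by simp
        then show False using False r by (simp add: s_def)
      qed
      let ?G = "givens e b c s"
      have Gb: "?G u \<bullet> b = 0"
        using givens_comp(2)[OF e b(1) b(2)[symmetric], of c s u]
        by (simp add: c_def s_def p_def[symmetric] q_def[symmetric] field_simps)
      have "\<forall>k\<in>Basis - insert e S. ?G u \<bullet> k = 0"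
      proof
        fix k assume k: "k \<in> Basis - insert e S"
        show "?G u \<bullet> k = 0"
        proof (cases "k = b")
          case True then show ?thesis using Gb by simp
        next
          case False
          then have "?G u \<bullet> k = u \<bullet> k" using givens_comp(3)[OF e b(1) b(2)[symmetric], of k c s u] k by auto
          then show ?thesis using hu k False by auto
        qed
      qed
      then obtain T where T: "rot T" "\<forall>k\<in>Basis - {e}. T (?G u) \<bullet> k = 0"
        using insert.IH by blast
      have "rot (\<lambda>x. T (?G x))"
        using T(1) mp_givens[OF e b(1) b(2)[symmetric] cs c1] givens_inner[OF e b(1) b(2)[symmetric] cs]
        unfolding rot_def by (auto intro: mp_comp)
      then show ?thesis using T(2) by blast
    qed
  qed
qed

lemma rot_to_e:
  fixes e u :: "'a::euclidean_space"
  assumes e: "e \<in> Basis" and u: "norm u = 1"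
  shows "\<exists>T. rot T \<and> (\<forall>x. \<bar>u \<bullet> x\<bar> = \<bar>e \<bullet> T x\<bar>)"
proof -
  obtain T where T: "rot T" "\<forall>k\<in>Basis - {e}. T u \<bullet> k = 0"
    using rot_exists_aux[OF e, of "Basis - {e}"] by auto
  have Tu: "T u = (T u \<bullet> e) *\<^sub>R e"
  proof -
    have "T u = (\<Sum>k\<in>Basis. (T u \<bullet> k) *\<^sub>R k)" by (simp add: euclidean_representation)
    also have "\<dots> = (T u \<bullet> e) *\<^sub>R e + (\<Sum>k\<in>Basis - {e}. (T u \<bullet> k) *\<^sub>R k)"
      using e by (subst sum.remove[of _ e]) auto
    also have "(\<Sum>k\<in>Basis - {e}. (T u \<bullet> k) *\<^sub>R k) = 0" using T(2) by simp
    finally show ?thesis by simp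
  qed
  have "T u \<bullet> T u = u \<bullet> u" using T(1) by (simp add: rot_def)
  also have "\<dots> = 1" using u by (simp add: power2_norm_eq_inner[symmetric])
  finally have "T u \<bullet> T u = 1" .
  then have "(T u \<bullet> e)^2 = 1" using e by (subst (asm) Tu, subst (asm) (2) Tu) (simp add: power2_eq_square)
  then have a: "\<bar>T u \<bullet> e\<bar> = 1" by (auto simp: power2_eq_1_iff)
  show ?thesis
  proof (intro exI conjI allI)
    fix x
    have "u \<bullet> x = T u \<bullet> T x" using T(1) by (simp add: rot_def)
    also have "\<dots> = (T u \<bullet> e) * (e \<bullet> T x)" by (subst Tu) simp
    finally show "\<bar>u \<bullet> x\<bar> = \<bar>e \<bullet> T x\<bar>" using a by (simp add: abs_mult)
  qed (rule T(1))
qed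

abbreviation U0 :: "'a::euclidean_space measure" where
  "U0 \<equiv> uniform_measure lborel (ball 0 1)"

lemma emeasure_ball01: "emeasure lborel (ball (0::'a::euclidean_space) 1) \<noteq> 0"
  "emeasure lborel (ball (0::'a::euclidean_space) 1) \<noteq> \<infinity>"
proof -
  show fin: "emeasure lborel (ball (0::'a::euclidean_space) 1) \<noteq> \<infinity>"
    using emeasure_lborel_ball_finite[of "0::'a" 1] by simp
  have "measure lborel (ball (0::'a) 1) > 0" by (rule content_ball_pos) simp
  then show "emeasure lborel (ball (0::'a::euclidean_space) 1) \<noteq> 0"
    using fin by (intro notI) (simp add: measure_def)
qed

lemma nrm_measurable[measurable]: "(\<lambda>x::'a::euclidean_space. x /\<^sub>R norm x) \<in> borel_measurable borel"
  by measurable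

lemma meas_U0: "measurable (U0::'a::euclidean_space measure) N = measurable borel N"
  by (rule measurable_cong_sets) auto

lemma prob_U0: "prob_space (U0 :: 'a::euclidean_space measure)"
  by (rule prob_space_uniform_measure) (use emeasure_ball01 in auto)

lemma prob_sphere: "prob_space (uniform_sphere :: 'a::euclidean_space measure)"
  unfolding uniform_sphere_def by (rule prob_space.prob_space_distr[OF prob_U0]) measurable

lemma sets_sphere[simp, measurable_cong]: "sets (uniform_sphere :: 'a::euclidean_space measure) = sets borel"
  by (simp add: uniform_sphere_def)

lemma space_sphere[simp]: "space (uniform_sphere :: 'a::euclidean_space measure) = UNIV"
  by (simp add: uniform_sphere_def)

lemma sphere_AE_nonzero:
  fixes psi :: "'a::euclidean_space"
  assumes "psi \<noteq> 0"
  shows "AE v in uniform_sphere. psi \<bullet> v \<noteq> 0"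
proof -
  have "negligible {x::'a. psi \<bullet> x = 0}" using assms by (intro negligible_hyperplane) simp
  then have "{x::'a. psi \<bullet> x = 0} \<in> null_sets lebesgue" by (simp add: negligible_iff_null_sets)
  moreover have "{x::'a. psi \<bullet> x = 0} \<in> sets lborel"
  proof -
    have "{x::'a \<in> space borel. psi \<bullet> x = 0} \<in> sets borel" by measurable
    then show ?thesis by simp
  qed
  ultimately have N: "{x::'a. psi \<bullet> x = 0} \<in> null_sets lborel"
    by (simp add: null_sets_completion_iff)
  have "AE x in lborel. psi \<bullet> x \<noteq> 0"
    using AE_not_in[OF N] by simp
  then have "AE x in U0. psi \<bullet> x \<noteq> 0"
    by (intro AE_uniform_measureI) (auto elim: AE_mp)
  then have "AE x in U0. psi \<bullet> (x /\<^sub>R norm x) \<noteq> 0"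
    by (rule AE_mp) (auto intro!: AE_I2)
  then show ?thesis
    unfolding uniform_sphere_def by (subst AE_distr_iff) auto
qed

lemma rot_norm: "rot T \<Longrightarrow> norm (T x) = norm x"
  by (simp add: rot_def norm_eq_sqrt_inner)

lemma rot_measurable: "rot T \<Longrightarrow> T \<in> borel_measurable borel"
  by (simp add: rot_def mp_def)

lemma distr_U0_rot:
  fixes T :: "'a::euclidean_space \<Rightarrow> 'a"
  assumes T: "rot T"
  shows "distr U0 borel T = U0"
proof (rule measure_eqI)
  show "sets (distr U0 borel T) = sets U0" by simp
  fix A assume A: "A \<in> sets (distr U0 borel T)"
  then have A': "A \<in> sets borel" by simp
  have Tm[measurable]: "T \<in> borel_measurable borel" using T by (rule rot_measurable)
  have pre: "T -` A \<in> sets borel" using measurable_sets[OF Tm A'] by simp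
  have eqT: "\<And>X. X \<in> sets borel \<Longrightarrow> emeasure lborel (T -` X) = emeasure lborel X"
  proof -
    fix X :: "'a set" assume X[measurable]: "X \<in> sets borel"
    have "emeasure lborel (T -` X) = (\<integral>\<^sup>+x. indicator (T -` X) x \<partial>lborel)"
      using measurable_sets[OF Tm X] by simp
    also have "\<dots> = (\<integral>\<^sup>+x. indicator X (T x) \<partial>lborel)" by (simp add: indicator_def)
    also have "\<dots> = (\<integral>\<^sup>+x. indicator X x \<partial>lborel)"
      using T unfolding rot_def mp_def by (metis borel_measurable_indicator X)
    finally show "emeasure lborel (T -` X) = emeasure lborel X" by simp
  qed
  have bb: "ball 0 1 \<inter> T -` A = T -` (ball 0 1 \<inter> A)"
    using rot_norm[OF T] by auto
  have "emeasure (distr U0 borel T) A = emeasure U0 (T -` A \<inter> space U0)"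
    by (rule emeasure_distr) (simp_all add: meas_U0 A')
  also have "\<dots> = emeasure lborel (ball 0 1 \<inter> T -` A) / emeasure lborel (ball (0::'a) 1)"
    using pre by (subst emeasure_uniform_measure) auto
  also have "\<dots> = emeasure lborel (T -` (ball 0 1 \<inter> A)) / emeasure lborel (ball (0::'a) 1)"
    by (simp only: bb)
  also have "\<dots> = emeasure lborel (ball 0 1 \<inter> A) / emeasure lborel (ball (0::'a) 1)"
    using A' by (subst eqT) auto
  also have "\<dots> = emeasure U0 A" using A' by simp
  finally show "emeasure (distr U0 borel T) A = emeasure U0 A" .
qed

lemma sphere_abs_inner:
  fixes e psi :: "'a::euclidean_space"
  assumes e: "e \<in> Basis" and psi: "norm psi = 1"
  shows "distr uniform_sphere borel (\<lambda>v. \<bar>psi \<bullet> v\<bar>) = distr uniform_sphere borel (\<lambda>v. \<bar>e \<bullet> v\<bar>)"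
proof -
  obtain T where T: "rot T" "\<And>x. \<bar>psi \<bullet> x\<bar> = \<bar>e \<bullet> T x\<bar>" using rot_to_e[OF e psi] by blast
  have [measurable]: "T \<in> borel_measurable borel" using T(1) by (rule rot_measurable)
  have "distr uniform_sphere borel (\<lambda>v. \<bar>psi \<bullet> v\<bar>) = distr U0 borel (\<lambda>x. \<bar>psi \<bullet> (x /\<^sub>R norm x)\<bar>)"
    unfolding uniform_sphere_def by (subst distr_distr) (auto simp: comp_def meas_U0)
  also have "\<dots> = distr U0 borel (\<lambda>x. \<bar>e \<bullet> (T x /\<^sub>R norm (T x))\<bar>)"
  proof (rule distr_cong)
    fix x :: 'a
    have "\<bar>psi \<bullet> (x /\<^sub>R norm x)\<bar> = \<bar>psi \<bullet> x\<bar> / norm x" by (simp add: abs_mult divide_inverse mult.commute)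
    also have "\<dots> = \<bar>e \<bullet> T x\<bar> / norm (T x)" using T by (simp add: rot_norm)
    also have "\<dots> = \<bar>e \<bullet> (T x /\<^sub>R norm (T x))\<bar>" by (simp add: abs_mult divide_inverse mult.commute)
    finally show "\<bar>psi \<bullet> (x /\<^sub>R norm x)\<bar> = \<bar>e \<bullet> (T x /\<^sub>R norm (T x))\<bar>" .
  qed auto
  also have "\<dots> = distr (distr U0 borel T) borel (\<lambda>y. \<bar>e \<bullet> (y /\<^sub>R norm y)\<bar>)"
    by (subst distr_distr) (auto simp: comp_def meas_U0)
  also have "\<dots> = distr U0 borel (\<lambda>y. \<bar>e \<bullet> (y /\<^sub>R norm y)\<bar>)"
    by (simp add: distr_U0_rot[OF T(1)])
  also have "\<dots> = distr uniform_sphere borel (\<lambda>v. \<bar>e \<bullet> v\<bar>)"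
    unfolding uniform_sphere_def by (subst distr_distr) (auto simp: comp_def meas_U0)
  finally show ?thesis .
qed

lemma prob_unif:
  fixes a b :: real assumes "a < b"
  shows "prob_space (uniform_measure lborel {a..b})"
  using assms by (intro prob_space_uniform_measure) auto

lemma lborel_affine_pm:
  fixes \<sigma> t :: real and Y :: "real set"
  assumes s: "\<sigma> = 1 \<or> \<sigma> = -1" and Y: "Y \<in> sets borel"
  shows "emeasure lborel {x. t + \<sigma> * x \<in> Y} = emeasure lborel Y"
proof -
  have s0: "\<sigma> \<noteq> 0" and sa: "\<bar>\<sigma>\<bar> = 1" using s by auto
  have "lborel = distr lborel borel (\<lambda>x. t + \<sigma> * x)"
    using lborel_real_affine[OF s0, of t] sa by (simp add: density_1)
  then have "emeasure lborel Y = emeasure (distr lborel borel (\<lambda>x. t + \<sigma> * x)) Y" by simp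
  also have "\<dots> = emeasure lborel ((\<lambda>x. t + \<sigma> * x) -` Y \<inter> space lborel)"
    using Y by (intro emeasure_distr) auto
  finally show ?thesis by (simp add: vimage_def)
qed

lemma unif_shift:
  fixes \<delta> \<sigma> :: real and A :: "real set"
  assumes d: "\<delta> > 0" and s: "\<sigma> = 1 \<or> \<sigma> = -1" and A: "A \<in> sets borel"
  shows "emeasure (uniform_measure lborel {-\<delta>..\<delta>}) {e. \<delta> + \<sigma> * e \<in> A}
       = emeasure (uniform_measure lborel {0..2*\<delta>}) A"
proof -
  have Am: "{e. \<delta> + \<sigma> * e \<in> A} \<in> sets borel"
  proof -
    have "(\<lambda>e. \<delta> + \<sigma> * e) -` A \<inter> space borel \<in> sets borel"
      by (rule measurable_sets[OF _ A]) simp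
    then show ?thesis by (simp add: vimage_def)
  qed
  have eq: "{-\<delta>..\<delta>} \<inter> {e. \<delta> + \<sigma> * e \<in> A} = {e. \<delta> + \<sigma> * e \<in> {0..2*\<delta>} \<inter> A}"
    using s by auto
  have AB: "{0..2*\<delta>} \<inter> A \<in> sets borel" using A by auto
  have "emeasure (uniform_measure lborel {-\<delta>..\<delta>}) {e. \<delta> + \<sigma> * e \<in> A}
      = emeasure lborel ({-\<delta>..\<delta>} \<inter> {e. \<delta> + \<sigma> * e \<in> A}) / emeasure lborel {-\<delta>..\<delta>}"
    using Am by (intro emeasure_uniform_measure) auto
  also have "\<dots> = emeasure lborel ({0..2*\<delta>} \<inter> A) / emeasure lborel {0..2*\<delta>}"
    unfolding eq lborel_affine_pm[OF s AB] using d by simp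
  also have "\<dots> = emeasure (uniform_measure lborel {0..2*\<delta>}) A"
    using A by (intro emeasure_uniform_measure[symmetric]) auto
  finally show ?thesis .
qed

definition gfun :: "real \<Rightarrow> 'a::euclidean_space \<Rightarrow> 'a \<times> real \<Rightarrow> real" where
  "gfun \<delta> psi = (\<lambda>(v, e). (if psi \<bullet> v \<ge> 0 then \<delta> + e else \<delta> - e) / \<bar>psi \<bullet> v\<bar>)"

lemma gfun_measurable[measurable]: "gfun \<delta> psi \<in> borel_measurable (borel \<Otimes>\<^sub>M borel)"
  unfolding gfun_def by measurable

lemma Tmap_distr:
  fixes \<delta> :: real and psi :: "'a::euclidean_space"
  assumes d: "\<delta> > 0"
  shows "distr ((uniform_sphere :: 'a measure) \<Otimes>\<^sub>M uniform_measure lborel {-\<delta>..\<delta>}) (borel \<Otimes>\<^sub>M borel)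
           (\<lambda>(v, e). (if psi \<bullet> v \<ge> 0 then \<delta> + e else \<delta> - e, v))
       = uniform_measure lborel {0..2*\<delta>} \<Otimes>\<^sub>M (uniform_sphere :: 'a measure)"
  (is "distr (?S \<Otimes>\<^sub>M ?U) _ ?T = ?U' \<Otimes>\<^sub>M ?S")
proof (rule sym, rule pair_measure_eqI)
  interpret S: prob_space ?S by (rule prob_sphere)
  interpret U: prob_space ?U by (rule prob_unif) (use d in auto)
  interpret U': prob_space ?U' by (rule prob_unif) (use d in auto)
  interpret SU: pair_sigma_finite ?S ?U ..
  show "sigma_finite_measure ?U'" "sigma_finite_measure ?S" using U'.sigma_finite_measure_axioms S.sigma_finite_measure_axioms by auto
  have Tm[measurable]: "?T \<in> measurable (?S \<Otimes>\<^sub>M ?U) (borel \<Otimes>\<^sub>M borel)" by measurable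
  show "sets (?U' \<Otimes>\<^sub>M ?S) = sets (distr (?S \<Otimes>\<^sub>M ?U) (borel \<Otimes>\<^sub>M borel) ?T)"
    unfolding sets_distr by (rule sets_pair_measure_cong) simp_all
  fix A B assume A: "A \<in> sets ?U'" and B: "B \<in> sets ?S"
  then have Ab: "A \<in> sets borel" and Bb: "B \<in> sets borel" by auto
  have X: "?T -` (A \<times> B) \<inter> space (?S \<Otimes>\<^sub>M ?U) \<in> sets (?S \<Otimes>\<^sub>M ?U)"
    by (rule measurable_sets[OF Tm]) (use Ab Bb in auto)
  have "emeasure (distr (?S \<Otimes>\<^sub>M ?U) (borel \<Otimes>\<^sub>M borel) ?T) (A \<times> B)
      = emeasure (?S \<Otimes>\<^sub>M ?U) (?T -` (A \<times> B) \<inter> space (?S \<Otimes>\<^sub>M ?U))"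
    by (rule emeasure_distr[OF Tm]) (use Ab Bb in auto)
  also have "\<dots> = (\<integral>\<^sup>+v. emeasure ?U (Pair v -` (?T -` (A \<times> B) \<inter> space (?S \<Otimes>\<^sub>M ?U))) \<partial>?S)"
    by (rule U.emeasure_pair_measure_alt[OF X])
  also have "\<dots> = (\<integral>\<^sup>+v. emeasure ?U' A * indicator B v \<partial>?S)"
  proof (rule nn_integral_cong)
    fix v :: 'a
    define \<sigma> where "\<sigma> = (if psi \<bullet> v \<ge> 0 then 1 else -1 :: real)"
    have "\<sigma> = 1 \<or> \<sigma> = -1" by (simp add: \<sigma>_def)
    then have u: "emeasure ?U {e. \<delta> + \<sigma> * e \<in> A} = emeasure ?U' A" by (rule unif_shift[OF d _ Ab])
    have sl: "Pair v -` (?T -` (A \<times> B) \<inter> space (?S \<Otimes>\<^sub>M ?U)) =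
      (if v \<in> B then {e. \<delta> + \<sigma> * e \<in> A} else {})"
      by (auto simp: space_pair_measure \<sigma>_def)
    show "emeasure ?U (Pair v -` (?T -` (A \<times> B) \<inter> space (?S \<Otimes>\<^sub>M ?U))) = emeasure ?U' A * indicator B v"
      unfolding sl by (cases "v \<in> B") (simp_all add: u)
  qed
  also have "\<dots> = emeasure ?U' A * emeasure ?S B"
    using Bb by (simp only: nn_integral_cmult_indicator sets_sphere)
  finally show "emeasure ?U' A * emeasure ?S B = emeasure (distr (?S \<Otimes>\<^sub>M ?U) (borel \<Otimes>\<^sub>M borel) ?T) (A \<times> B)" ..
qed

lemma law_X_eq:
  fixes \<delta> :: real and psi e0 :: "'a::euclidean_space"
  assumes d: "\<delta> > 0" and psi: "norm psi = 1" and e0: "e0 \<in> Basis"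
  shows "law_X \<delta> e0 = distr ((uniform_sphere :: 'a measure) \<Otimes>\<^sub>M uniform_measure lborel {-\<delta>..\<delta>}) borel (gfun \<delta> psi)"
proof -
  let ?S = "uniform_sphere :: 'a measure" and ?U = "uniform_measure lborel {-\<delta>..\<delta>}"
    and ?U' = "uniform_measure lborel {0..2*\<delta>}"
  interpret S: prob_space ?S by (rule prob_sphere)
  have h[measurable]: "\<And>w::'a. (\<lambda>(s, v). s / \<bar>w \<bullet> v\<bar>) \<in> borel_measurable (borel \<Otimes>\<^sub>M borel)" by measurable
  have q[measurable]: "(\<lambda>(s, z::real). s / z) \<in> borel_measurable (borel \<Otimes>\<^sub>M borel)" by measurable
  have sd: "\<And>w::'a. sigma_finite_measure (distr ?S borel (\<lambda>v. \<bar>w \<bullet> v\<bar>))"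
  proof -
    fix w :: 'a
    have "prob_space (distr ?S borel (\<lambda>v. \<bar>w \<bullet> v\<bar>))" by (rule S.prob_space_distr) measurable
    then show "sigma_finite_measure (distr ?S borel (\<lambda>v. \<bar>w \<bullet> v\<bar>))"
      by (simp add: prob_space_imp_sigma_finite)
  qed
  have red: "\<And>w::'a. distr (?U' \<Otimes>\<^sub>M ?S) borel (\<lambda>(s, v). s / \<bar>w \<bullet> v\<bar>)
      = distr (?U' \<Otimes>\<^sub>M distr ?S borel (\<lambda>v. \<bar>w \<bullet> v\<bar>)) borel (\<lambda>(s, z). s / z)"
  proof -
    fix w :: 'a
    have "?U' \<Otimes>\<^sub>M distr ?S borel (\<lambda>v. \<bar>w \<bullet> v\<bar>) = distr ?U' borel (\<lambda>x. x) \<Otimes>\<^sub>M distr ?S borel (\<lambda>v. \<bar>w \<bullet> v\<bar>)"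
      by (simp add: distr_id2)
    also have "\<dots> = distr (?U' \<Otimes>\<^sub>M ?S) (borel \<Otimes>\<^sub>M borel) (\<lambda>(x, y). (x, \<bar>w \<bullet> y\<bar>))"
      by (rule pair_measure_distr) (auto intro: sd)
    finally have "distr (?U' \<Otimes>\<^sub>M distr ?S borel (\<lambda>v. \<bar>w \<bullet> v\<bar>)) borel (\<lambda>(s, z). s / z)
        = distr (distr (?U' \<Otimes>\<^sub>M ?S) (borel \<Otimes>\<^sub>M borel) (\<lambda>(x, y). (x, \<bar>w \<bullet> y\<bar>))) borel (\<lambda>(s, z). s / z)"
      by simp
    also have "\<dots> = distr (?U' \<Otimes>\<^sub>M ?S) borel (\<lambda>(s, v). s / \<bar>w \<bullet> v\<bar>)"
      by (subst distr_distr) (auto simp: comp_def split_beta')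
    finally show "distr (?U' \<Otimes>\<^sub>M ?S) borel (\<lambda>(s, v). s / \<bar>w \<bullet> v\<bar>)
      = distr (?U' \<Otimes>\<^sub>M distr ?S borel (\<lambda>v. \<bar>w \<bullet> v\<bar>)) borel (\<lambda>(s, z). s / z)" ..
  qed
  have "law_X \<delta> e0 = distr (?U' \<Otimes>\<^sub>M ?S) borel (\<lambda>(s, v). s / \<bar>e0 \<bullet> v\<bar>)"
    by (simp add: law_X_def)
  also have "\<dots> = distr (?U' \<Otimes>\<^sub>M ?S) borel (\<lambda>(s, v). s / \<bar>psi \<bullet> v\<bar>)"
    unfolding red sphere_abs_inner[OF e0 psi] ..
  also have "\<dots> = distr (distr (?S \<Otimes>\<^sub>M ?U) (borel \<Otimes>\<^sub>M borel)
           (\<lambda>(v, e). (if psi \<bullet> v \<ge> 0 then \<delta> + e else \<delta> - e, v))) borel (\<lambda>(s, v). s / \<bar>psi \<bullet> v\<bar>)"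
    by (simp add: Tmap_distr[OF d])
  also have "\<dots> = distr (?S \<Otimes>\<^sub>M ?U) borel (gfun \<delta> psi)"
    by (subst distr_distr) (auto simp: comp_def gfun_def split_beta')
  finally show ?thesis .
qed

definition lo :: "real \<Rightarrow> real \<Rightarrow> real \<Rightarrow> ereal" where
  "lo \<delta> a e = (if a > 0 then ereal ((e - \<delta>) / a) else if a < 0 then ereal ((e + \<delta>) / a) else -\<infinity>)"
definition hi :: "real \<Rightarrow> real \<Rightarrow> real \<Rightarrow> ereal" where
  "hi \<delta> a e = (if a > 0 then ereal ((e + \<delta>) / a) else if a < 0 then ereal ((e - \<delta>) / a) else \<infinity>)"

lemma constr_iff: "\<bar>r * a - e\<bar> \<le> \<delta> \<longleftrightarrow> (a \<noteq> 0 \<or> \<bar>e\<bar> \<le> \<delta>) \<and> lo \<delta> a e \<le> ereal r \<and> ereal r \<le> hi \<delta> a e"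
proof (cases a "0::real" rule: linorder_cases)
  case less
  then show ?thesis by (auto simp: lo_def hi_def abs_le_iff field_simps)
next
  case greater
  then show ?thesis by (auto simp: lo_def hi_def abs_le_iff field_simps)
qed (auto simp: lo_def hi_def)

lemma lo_less: "lo \<delta> a e < \<infinity>" by (simp add: lo_def)

definition Rc :: "real \<Rightarrow> nat set \<Rightarrow> (nat \<Rightarrow> real) \<Rightarrow> (nat \<Rightarrow> real) \<Rightarrow> ereal" where
  "Rc \<delta> I a e = (if (\<forall>n\<in>I. a n \<noteq> 0 \<or> \<bar>e n\<bar> \<le> \<delta>) \<and>
      max 0 (Max ((\<lambda>n. lo \<delta> (a n) (e n)) ` I)) \<le> Min ((\<lambda>n. hi \<delta> (a n) (e n)) ` I)
     then Min ((\<lambda>n. hi \<delta> (a n) (e n)) ` I) else -\<infinity>)"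

lemma Sup_interval_ereal:
  fixes L H :: ereal
  assumes "L \<le> H" "0 \<le> L" "L < \<infinity>"
  shows "Sup {ereal r |r. L \<le> ereal r \<and> ereal r \<le> H} = H"
proof (cases H)
  case (real h)
  have "h \<in> {r. L \<le> ereal r \<and> ereal r \<le> H}" using assms real by auto
  then have "H \<le> Sup {ereal r |r. L \<le> ereal r \<and> ereal r \<le> H}"
    using real by (auto intro!: Sup_upper)
  moreover have "Sup {ereal r |r. L \<le> ereal r \<and> ereal r \<le> H} \<le> H"
    by (auto intro!: Sup_least)
  ultimately show ?thesis by simp
next
  case PInf
  obtain l where l: "L = ereal l" using assms by (cases L) auto
  have "Sup {ereal r |r. L \<le> ereal r \<and> ereal r \<le> H} = top"
    unfolding Sup_eq_top_iff
  proof (intro allI impI)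
    fix x :: ereal assume "x < top"
    obtain y where y: "x < ereal y"
    proof (cases x)
      case (real r) then show ?thesis by (intro that[of "r + 1"]) simp
    next
      case PInf then show ?thesis using \<open>x < top\<close> by simp
    next
      case MInf then show ?thesis by (intro that[of 0]) simp
    qed
    show "\<exists>i\<in>{ereal r |r. L \<le> ereal r \<and> ereal r \<le> H}. x < i"
    proof (rule bexI[of _ "ereal (max y l)"])
      show "x < ereal (max y l)" by (rule less_le_trans[OF y]) simp
      show "ereal (max y l) \<in> {ereal r |r. L \<le> ereal r \<and> ereal r \<le> H}"
        by (intro CollectI exI[of _ "max y l"]) (simp add: l PInf)
    qed
  qed
  then show ?thesis using PInf by (simp only: top_ereal_def)
next
  case MInf with assms show ?thesis by simp
qed

lemma Sup_Rc:
  fixes a e :: "nat \<Rightarrow> real"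
  assumes I: "finite I" "I \<noteq> {}"
  shows "Sup {ereal r |r. r \<ge> 0 \<and> (\<forall>n\<in>I. \<bar>r * a n - e n\<bar> \<le> \<delta>)} = Rc \<delta> I a e"
proof -
  let ?L = "max 0 (Max ((\<lambda>n. lo \<delta> (a n) (e n)) ` I))"
  let ?H = "Min ((\<lambda>n. hi \<delta> (a n) (e n)) ` I)"
  let ?ok = "\<forall>n\<in>I. a n \<noteq> 0 \<or> \<bar>e n\<bar> \<le> \<delta>"
  have iff: "r \<ge> 0 \<and> (\<forall>n\<in>I. \<bar>r * a n - e n\<bar> \<le> \<delta>) \<longleftrightarrow> ?ok \<and> ?L \<le> ereal r \<and> ereal r \<le> ?H" for r
    using I by (auto simp: constr_iff Max_le_iff Min_ge_iff)
  have M: "Max ((\<lambda>n. lo \<delta> (a n) (e n)) ` I) < \<infinity>"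
  proof -
    have "Max ((\<lambda>n. lo \<delta> (a n) (e n)) ` I) \<in> (\<lambda>n. lo \<delta> (a n) (e n)) ` I"
      using I by (intro Max_in) auto
    then obtain n where "Max ((\<lambda>n. lo \<delta> (a n) (e n)) ` I) = lo \<delta> (a n) (e n)" by auto
    then show ?thesis using lo_less by simp
  qed
  have L: "0 \<le> ?L" "?L < \<infinity>"
    using M by (auto simp: max_def)
  show ?thesis
  proof (cases "?ok \<and> ?L \<le> ?H")
    case True
    then have "{ereal r |r. r \<ge> 0 \<and> (\<forall>n\<in>I. \<bar>r * a n - e n\<bar> \<le> \<delta>)} = {ereal r |r. ?L \<le> ereal r \<and> ereal r \<le> ?H}"
      by (simp only: iff) simp
    then show ?thesis using True Sup_interval_ereal[of ?L ?H] L by (simp add: Rc_def)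
  next
    case False
    have "\<not> (r \<ge> 0 \<and> (\<forall>n\<in>I. \<bar>r * a n - e n\<bar> \<le> \<delta>))" for r
    proof
      assume "r \<ge> 0 \<and> (\<forall>n\<in>I. \<bar>r * a n - e n\<bar> \<le> \<delta>)"
      then have "?ok \<and> ?L \<le> ereal r \<and> ereal r \<le> ?H" using iff by blast
      then show False using False order.trans by blast
    qed
    then have e: "{ereal r |r. r \<ge> 0 \<and> (\<forall>n\<in>I. \<bar>r * a n - e n\<bar> \<le> \<delta>)} = {}" by blast
    have "Rc \<delta> I a e = -\<infinity>" unfolding Rc_def by (rule if_not_P[OF False])
    then show ?thesis unfolding e by (simp add: bot_ereal_def)
  qed
qed

lemma Rc_good:
  fixes a e :: "nat \<Rightarrow> real"
  assumes I: "finite I" "I \<noteq> {}" and d: "\<delta> > 0"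
    and good: "\<And>n. n \<in> I \<Longrightarrow> a n \<noteq> 0 \<and> \<bar>e n\<bar> \<le> \<delta>"
  shows "Rc \<delta> I a e = ereal (Min ((\<lambda>n. (if a n \<ge> 0 then \<delta> + e n else \<delta> - e n) / \<bar>a n\<bar>) ` I))"
proof -
  let ?g = "\<lambda>n. (if a n \<ge> 0 then \<delta> + e n else \<delta> - e n) / \<bar>a n\<bar>"
  have hi: "hi \<delta> (a n) (e n) = ereal (?g n)" if "n \<in> I" for n
    using good[OF that] by (auto simp: hi_def field_simps)
  have lo: "lo \<delta> (a n) (e n) \<le> 0" if "n \<in> I" for n
    using good[OF that] by (auto simp: lo_def divide_nonpos_pos divide_nonneg_neg)
  have g0: "?g n \<ge> 0" if "n \<in> I" for n
    using good[OF that] by auto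
  have H: "Min ((\<lambda>n. hi \<delta> (a n) (e n)) ` I) = ereal (Min (?g ` I))"
  proof -
    have "(\<lambda>n. hi \<delta> (a n) (e n)) ` I = ereal ` (?g ` I)" using hi by (auto simp: image_image)
    moreover have "Min (ereal ` (?g ` I)) = ereal (Min (?g ` I))"
      using I by (intro mono_Min_commute[symmetric]) (auto simp: mono_def)
    ultimately show ?thesis by simp
  qed
  have "Max ((\<lambda>n. lo \<delta> (a n) (e n)) ` I) \<le> 0"
    using I lo by (simp add: Max_le_iff)
  then have L: "max 0 (Max ((\<lambda>n. lo \<delta> (a n) (e n)) ` I)) = 0"
    by (simp add: max_absorb1)
  have "0 \<le> Min (?g ` I)" using I g0 by auto
  then show ?thesis using good unfolding Rc_def H L by auto
qed

lemma Rc_measurable[measurable]: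
  fixes a e :: "nat \<Rightarrow> 'm \<Rightarrow> real"
  assumes "finite I" and [measurable]: "\<And>n. n \<in> I \<Longrightarrow> a n \<in> borel_measurable M" "\<And>n. n \<in> I \<Longrightarrow> e n \<in> borel_measurable M"
  shows "(\<lambda>\<omega>. Rc \<delta> I (\<lambda>n. a n \<omega>) (\<lambda>n. e n \<omega>)) \<in> borel_measurable M"
proof -
  have [measurable]: "(\<lambda>\<omega>. lo \<delta> (a n \<omega>) (e n \<omega>)) \<in> borel_measurable M" if "n \<in> I" for n
    using that unfolding lo_def by measurable
  have [measurable]: "(\<lambda>\<omega>. hi \<delta> (a n \<omega>) (e n \<omega>)) \<in> borel_measurable M" if "n \<in> I" for n
    using that unfolding hi_def by measurable
  show ?thesis unfolding Rc_def using assms(1) by measurable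
qed

theorem lemma3p2:
  fixes M :: "'m measure"
    and phi :: "nat \<Rightarrow> 'm \<Rightarrow> 'a::euclidean_space"
    and eps :: "nat \<Rightarrow> 'm \<Rightarrow> real"
    and \<delta> :: real and N :: nat and psi e0 :: 'a
  assumes "prob_space M"
    and "\<delta> > 0" and "N \<ge> 1"
    and indep: "prob_space.indep_vars M (\<lambda>_. borel \<Otimes>\<^sub>M borel) (\<lambda>n \<omega>. (phi n \<omega>, eps n \<omega>)) {1..N}"
    and dist: "\<And>n. n \<in> {1..N} \<Longrightarrow>
       distr M (borel \<Otimes>\<^sub>M borel) (\<lambda>\<omega>. (phi n \<omega>, eps n \<omega>))
         = (uniform_sphere :: 'a measure) \<Otimes>\<^sub>M uniform_measure lborel {-\<delta>..\<delta>}"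
    and "norm psi = 1"
    and "e0 \<in> Basis"
  shows "distr M borel (\<lambda>\<omega>. radial_R N \<delta> (\<lambda>n. phi n \<omega>) (\<lambda>n. eps n \<omega>) psi)
         = distr (law_Y N \<delta> e0) borel ereal"
proof -
  interpret P: prob_space M by fact
  have d: "\<delta> > 0" by fact
  have psi: "norm psi = 1" by fact
  have e0: "e0 \<in> Basis" by fact
  define I where "I = {1..N}"
  have I: "finite I" "I \<noteq> {}" using \<open>N \<ge> 1\<close> by (auto simp: I_def)
  let ?S = "uniform_sphere :: 'a measure" and ?U = "uniform_measure lborel {-\<delta>..\<delta>}"
  let ?SU = "?S \<Otimes>\<^sub>M ?U"
  let ?X = "\<lambda>n \<omega>. (phi n \<omega>, eps n \<omega>)"
  let ?g = "gfun \<delta> psi"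
  interpret S: prob_space ?S by (rule prob_sphere)
  interpret U: prob_space ?U by (rule prob_unif) (use d in auto)
  interpret SU: pair_prob_space ?S ?U ..
  have Xm: "?X n \<in> measurable M (borel \<Otimes>\<^sub>M borel)" if "n \<in> I" for n
    using indep that unfolding P.indep_vars_def I_def by auto
  have phim[measurable]: "phi n \<in> borel_measurable M" if "n \<in> I" for n
    using measurable_compose[OF Xm[OF that] measurable_fst] by (simp add: comp_def)
  have epsm[measurable]: "eps n \<in> borel_measurable M" if "n \<in> I" for n
    using measurable_compose[OF Xm[OF that] measurable_snd] by (simp add: comp_def)
  have am: "(\<lambda>\<omega>. psi \<bullet> phi n \<omega>) \<in> borel_measurable M" if "n \<in> I" for n
    using that by measurable
  have Req: "radial_R N \<delta> (\<lambda>n. phi n \<omega>) (\<lambda>n. eps n \<omega>) psi = Rc \<delta> I (\<lambda>n. psi \<bullet> phi n \<omega>) (\<lambda>n. eps n \<omega>)" for \<omega>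
  proof -
    have "{ereal r |r. r \<ge> 0 \<and> r *\<^sub>R psi \<in> polytope_P N \<delta> (\<lambda>n. phi n \<omega>) (\<lambda>n. eps n \<omega>)}
        = {ereal r |r. r \<ge> 0 \<and> (\<forall>n\<in>I. \<bar>r * (psi \<bullet> phi n \<omega>) - eps n \<omega>\<bar> \<le> \<delta>)}"
      by (simp add: polytope_P_def I_def)
    then show ?thesis unfolding radial_R_def using Sup_Rc[OF I] by simp
  qed
  have Rm: "(\<lambda>\<omega>. radial_R N \<delta> (\<lambda>n. phi n \<omega>) (\<lambda>n. eps n \<omega>) psi) \<in> borel_measurable M"
    unfolding Req by (rule Rc_measurable[OF I(1) am epsm])
  have AEgood: "AE \<omega> in M. \<forall>n\<in>I. psi \<bullet> phi n \<omega> \<noteq> 0 \<and> \<bar>eps n \<omega>\<bar> \<le> \<delta>"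
  proof (rule AE_finite_allI[OF I(1)])
    fix n assume n: "n \<in> I"
    have psi0: "psi \<noteq> 0" using psi by auto
    have AESU: "AE x in ?SU. psi \<bullet> fst x \<noteq> 0 \<and> \<bar>snd x\<bar> \<le> \<delta>"
    proof (rule SU.AE_pair_measure)
      show "{x \<in> space ?SU. psi \<bullet> fst x \<noteq> 0 \<and> \<bar>snd x\<bar> \<le> \<delta>} \<in> sets ?SU" by measurable
      have AU: "AE y in ?U. \<bar>y\<bar> \<le> \<delta>"
        by (intro AE_uniform_measureI) (auto intro!: AE_I2)
      show "AE x in ?S. AE y in ?U. psi \<bullet> fst (x, y) \<noteq> 0 \<and> \<bar>snd (x, y)\<bar> \<le> \<delta>"
        using sphere_AE_nonzero[OF psi0]
      proof eventually_elim
        case (elim x)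
        show ?case using AU by eventually_elim (use elim in auto)
      qed
    qed
    have dn: "distr M (borel \<Otimes>\<^sub>M borel) (?X n) = ?SU" using dist n unfolding I_def by blast
    have "AE x in distr M (borel \<Otimes>\<^sub>M borel) (?X n). psi \<bullet> fst x \<noteq> 0 \<and> \<bar>snd x\<bar> \<le> \<delta>"
      unfolding dn by (rule AESU)
    then show "AE \<omega> in M. psi \<bullet> phi n \<omega> \<noteq> 0 \<and> \<bar>eps n \<omega>\<bar> \<le> \<delta>"
      by (subst (asm) AE_distr_iff) (use Xm[OF n] in \<open>auto\<close>)
  qed
  let ?F = "\<lambda>x. ereal (Min ((\<lambda>n. ?g (x n)) ` I))"
  have Fm: "?F \<in> borel_measurable (PiM I (\<lambda>_. borel \<Otimes>\<^sub>M borel))"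
    using I(1) by measurable
  have "distr M borel (\<lambda>\<omega>. radial_R N \<delta> (\<lambda>n. phi n \<omega>) (\<lambda>n. eps n \<omega>) psi)
      = distr M borel (\<lambda>\<omega>. ?F (\<lambda>n\<in>I. ?X n \<omega>))"
  proof (rule distr_cong_AE)
    show "AE \<omega> in M. radial_R N \<delta> (\<lambda>n. phi n \<omega>) (\<lambda>n. eps n \<omega>) psi = ?F (\<lambda>n\<in>I. ?X n \<omega>)"
      using AEgood
    proof eventually_elim
      case (elim \<omega>)
      have "Min ((\<lambda>n. ?g ((\<lambda>n\<in>I. ?X n \<omega>) n)) ` I) = Min ((\<lambda>n. (if psi \<bullet> phi n \<omega> \<ge> 0 then \<delta> + eps n \<omega> else \<delta> - eps n \<omega>) / \<bar>psi \<bullet> phi n \<omega>\<bar>) ` I)"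
        by (intro arg_cong[where f=Min] image_cong) (auto simp: gfun_def)
      then show ?case using Rc_good[OF I d, of "\<lambda>n. psi \<bullet> phi n \<omega>" "\<lambda>n. eps n \<omega>"] elim
        by (simp add: Req)
    qed
    show "(\<lambda>\<omega>. ?F (\<lambda>n\<in>I. ?X n \<omega>)) \<in> borel_measurable M"
      by (rule measurable_compose[OF _ Fm]) (rule measurable_restrict, use Xm in auto)
  qed (auto intro: Rm)
  also have "\<dots> = distr (distr M (PiM I (\<lambda>_. borel \<Otimes>\<^sub>M borel)) (\<lambda>\<omega>. \<lambda>n\<in>I. ?X n \<omega>)) borel ?F"
    by (subst distr_distr[OF Fm]) (auto simp: comp_def intro!: measurable_restrict Xm)
  also have "distr M (PiM I (\<lambda>_. borel \<Otimes>\<^sub>M borel)) (\<lambda>\<omega>. \<lambda>n\<in>I. ?X n \<omega>) = PiM I (\<lambda>_. ?SU)"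
  proof -
    have "distr M (PiM I (\<lambda>_. borel \<Otimes>\<^sub>M borel)) (\<lambda>\<omega>. \<lambda>n\<in>I. ?X n \<omega>)
        = PiM I (\<lambda>n. distr M (borel \<Otimes>\<^sub>M borel) (?X n))"
      using P.indep_vars_iff_distr_eq_PiM'[OF I(2), of ?X "\<lambda>_. borel \<Otimes>\<^sub>M borel"] indep Xm
      by (simp add: I_def)
    also have "\<dots> = PiM I (\<lambda>_. ?SU)"
      by (rule PiM_cong) (auto simp: I_def dist)
    finally show ?thesis .
  qed
  finally have step1: "distr M borel (\<lambda>\<omega>. radial_R N \<delta> (\<lambda>n. phi n \<omega>) (\<lambda>n. eps n \<omega>) psi) = distr (PiM I (\<lambda>_. ?SU)) borel ?F" .
  have LX: "law_X \<delta> e0 = distr ?SU borel ?g" by (rule law_X_eq[OF d psi e0])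
  have pX: "prob_space (law_X \<delta> e0)" unfolding LX by (rule SU.prob_space_distr) simp
  have sX[simp, measurable_cong]: "sets (law_X \<delta> e0) = sets borel" by (simp add: LX)
  have gm: "?g \<in> measurable ?SU (law_X \<delta> e0)"
    by (simp add: measurable_cong_sets[OF sets_pair_measure_cong[OF sets_sphere sets_uniform_measure] sX])
  have Minm: "(\<lambda>y. Min (y ` I)) \<in> borel_measurable (PiM I (\<lambda>_. law_X \<delta> e0))"
    using I(1) by measurable
  have dP: "distr (PiM I (\<lambda>_. ?SU)) (PiM I (\<lambda>_. law_X \<delta> e0)) (compose I ?g) = PiM I (\<lambda>_. law_X \<delta> e0)"
  proof -
    have "distr (PiM I (\<lambda>_. ?SU)) (PiM I (\<lambda>_. law_X \<delta> e0)) (compose I ?g) = PiM I (\<lambda>_. distr ?SU (law_X \<delta> e0) ?g)"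
      by (rule distr_PiM_finite_prob_space[OF I(1)])
         (auto intro!: product_prob_spaceI pX SU.prob_space_axioms gm)
    also have "distr ?SU (law_X \<delta> e0) ?g = law_X \<delta> e0"
      by (subst LX) (rule distr_cong, simp_all)
    finally show ?thesis .
  qed
  have cm: "compose I ?g \<in> measurable (PiM I (\<lambda>_. ?SU)) (PiM I (\<lambda>_. law_X \<delta> e0))"
    unfolding compose_def
  proof (rule measurable_restrict)
    fix i assume "i \<in> I"
    then show "(\<lambda>x. ?g (x i)) \<in> measurable (PiM I (\<lambda>_. ?SU)) (law_X \<delta> e0)"
      using measurable_compose[OF measurable_component_singleton[of i I "\<lambda>_. ?SU"] gm] by simp
  qed
  have "distr (PiM I (\<lambda>_. ?SU)) borel ?F = distr (PiM I (\<lambda>_. ?SU)) borel ((\<lambda>y. ereal (Min (y ` I))) \<circ> compose I ?g)"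
    by (rule distr_cong) (auto simp: compose_def comp_def intro!: arg_cong[where f="\<lambda>A. ereal (Min A)"])
  also have "\<dots> = distr (PiM I (\<lambda>_. law_X \<delta> e0)) borel (\<lambda>y. ereal (Min (y ` I)))"
    by (subst distr_distr[symmetric, OF _ cm]) (use Minm in \<open>simp_all add: dP\<close>)
  also have "\<dots> = distr (law_Y N \<delta> e0) borel ereal"
    unfolding law_Y_def I_def[symmetric]
    by (subst distr_distr) (use Minm in \<open>auto simp: comp_def\<close>)
  finally show ?thesis using step1 by simp
qed

end
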